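(* Let $\Omega=\{\omega_1,\dots,\omega_N\}$ be a finite set with probabilities $p_i\in(0,1]$, $\sum_{i=1}^N p_i=1$. Let $C\in\mathbb{R}^{d\times n}$, $A\in\mathbb{R}^{k\times n}$, $b\in\mathbb{R}^k$, and for each $i$ let $Q_i\in\mathbb{R}^{d\times m}$, $T_i\in\mathbb{R}^{\ell\times n}$, $W_i\in\mathbb{R}^{\ell\times m}$, $u^i\in\mathbb{R}^\ell$. Let $S\subseteq\mathbb{R}^{n+Nm}$ be the set of all $z=(x,y^1,\dots,y^N)$ with $x\in\mathbb{R}^n$, $y^i\in\mathbb{R}^m$, $Ax=b$, $T_ix+W_iy^i=u^i$ for $i=1,\dots,N$, and $x\ge 0$, $y^1,\dots,y^N\ge 0$, and let $Pz := Cx+\sum_{i=1}^N p_iQ_iy^i$. Suppose $\bar z=(\bar x,\bar y^1,\dots,\bar y^N)\in S$ is a minimizer of the multi-objective linear program "minimize $Pz$ subject to $z\in S$". Then for every $i\in\{1,\dots,N\}$, $\bar y^i$ is a minimizer of the multi-objective linear program "minimize $C\bar x+Q_iy$ subject to $W_iy=u^i-T_i\bar x$, $y\ge 0$, $y\in\mathbb{R}^m$".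
   Context: Objective values in $\mathbb{R}^d$ are ordered componentwise (ordering cone $\mathbb{R}^d_+$). For a multi-objective linear program "minimize $Mw$ subject to $w\in D$" (with $D$ a polyhedral feasible set and $M$ a matrix), its upper image is $\bigcup_{w\in D}\{Mw\}+\mathbb{R}^d_+$; a point $\bar v$ of the upper image is minimal if there is no $v$ in the upper image with $v\in\{\bar v\}-(\mathbb{R}^d_+\setminus\{0\})$; a feasible $\bar w\in D$ is a minimizer if $M\bar w$ is minimal in the upper image. *)

theory Defs
  imports "HOL-Analysis.Analysis"
begin

definition nonneg_cone :: "(real^'d) set" where
  "nonneg_cone = {c. \<forall>j. 0 \<le> c $ j}"

definition upper_image :: "('w \<Rightarrow> real^'d) \<Rightarrow> 'w set \<Rightarrow> (real^'d) set" where
  "upper_image M D = (\<Union>w\<in>D. {M w + c | c. c \<in> nonneg_cone})"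

definition minimal_point :: "(real^'d) set \<Rightarrow> real^'d \<Rightarrow> bool" where
  "minimal_point U vb \<longleftrightarrow> vb \<in> U \<and>
     \<not> (\<exists>v\<in>U. v \<in> {vb - c | c. c \<in> nonneg_cone - {0}})"

definition mo_minimizer :: "('w \<Rightarrow> real^'d) \<Rightarrow> 'w set \<Rightarrow> 'w \<Rightarrow> bool" where
  "mo_minimizer M D wb \<longleftrightarrow> wb \<in> D \<and> minimal_point (upper_image M D) (M wb)"

end

theory Submission
  imports Defs
begin

lemma sum_upd_aux:
  fixes g :: "'N::finite \<Rightarrow> 'a \<Rightarrow> 'b::ab_group_add" and yb :: "'N \<Rightarrow> 'a"
  shows "(\<Sum>j\<in>UNIV. g j ((yb(i:=y)) j)) = (\<Sum>j\<in>UNIV. g j (yb j)) + (g i y - g i (yb i))"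
proof -
  have "(\<Sum>j\<in>UNIV. g j ((yb(i:=y)) j)) = (\<Sum>j\<in>UNIV. g j (yb j) + (if j = i then g i y - g i (yb i) else 0))"
    by (rule sum.cong) auto
  also have "\<dots> = (\<Sum>j\<in>UNIV. g j (yb j)) + (g i y - g i (yb i))"
    by (simp add: sum.distrib)
  finally show ?thesis .
qed

theorem proposition2p5:
  fixes p :: "'N::finite \<Rightarrow> real"
    and C :: "real^'n::finite^'d::finite"
    and A :: "real^'n^'k::finite" and b :: "real^'k"
    and Q :: "'N \<Rightarrow> real^'m::finite^'d"
    and T :: "'N \<Rightarrow> real^'n^'l::finite"
    and W :: "'N \<Rightarrow> real^'m^'l"
    and u :: "'N \<Rightarrow> real^'l"
    and xb :: "real^'n" and yb :: "'N \<Rightarrow> real^'m"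
  assumes "\<forall>i. 0 < p i \<and> p i \<le> 1"
    and "(\<Sum>i\<in>UNIV. p i) = 1"
    and "mo_minimizer
           (\<lambda>(x, y). C *v x + (\<Sum>i\<in>UNIV. p i *\<^sub>R (Q i *v y i)))
           {(x, y). A *v x = b \<and> (\<forall>i. T i *v x + W i *v y i = u i)
                    \<and> (\<forall>j. 0 \<le> x $ j) \<and> (\<forall>i j. 0 \<le> y i $ j)}
           (xb, yb)"
  shows "\<forall>i. mo_minimizer (\<lambda>y. C *v xb + Q i *v y)
                 {y. W i *v y = u i - T i *v xb \<and> (\<forall>j. 0 \<le> y $ j)}
                 (yb i)"
proof
  fix i
  define P where "P = (\<lambda>(x::real^'n, y::'N \<Rightarrow> real^'m). C *v x + (\<Sum>i\<in>UNIV. p i *\<^sub>R (Q i *v y i)))"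
  define D where "D = {(x, y). A *v x = b \<and> (\<forall>i. T i *v x + W i *v y i = u i)
                    \<and> (\<forall>j. 0 \<le> x $ j) \<and> (\<forall>i j. 0 \<le> y i $ j)}"
  have feas: "(xb, yb) \<in> D" and nomin: "\<not> (\<exists>v\<in>upper_image P D. v \<in> {P (xb, yb) - c | c. c \<in> nonneg_cone - {0}})"
    using assms(3) unfolding mo_minimizer_def minimal_point_def P_def D_def by auto
  have pi: "0 < p i" using assms(1) by auto
  have fi: "yb i \<in> {y. W i *v y = u i - T i *v xb \<and> (\<forall>j. 0 \<le> y $ j)}"
    using feas unfolding D_def by (auto simp: algebra_simps)
  have z: "(0::real^'d) \<in> nonneg_cone" by (simp add: nonneg_cone_def)
  have inU: "C *v xb + Q i *v yb i \<in> upper_image (\<lambda>y. C *v xb + Q i *v y)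
                 {y. W i *v y = u i - T i *v xb \<and> (\<forall>j. 0 \<le> y $ j)}"
    unfolding upper_image_def using fi z by force
  have "\<not> (\<exists>v\<in>upper_image (\<lambda>y. C *v xb + Q i *v y)
                 {y. W i *v y = u i - T i *v xb \<and> (\<forall>j. 0 \<le> y $ j)}.
          v \<in> {(C *v xb + Q i *v yb i) - c | c. c \<in> nonneg_cone - {0}})"
  proof
    assume "\<exists>v\<in>upper_image (\<lambda>y. C *v xb + Q i *v y)
                 {y. W i *v y = u i - T i *v xb \<and> (\<forall>j. 0 \<le> y $ j)}.
          v \<in> {(C *v xb + Q i *v yb i) - c | c. c \<in> nonneg_cone - {0}}"
    then obtain y c c' where y: "W i *v y = u i - T i *v xb" "\<forall>j. 0 \<le> y $ j"
      and c': "c' \<in> nonneg_cone" and c: "c \<in> nonneg_cone" "c \<noteq> 0"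
      and eq: "C *v xb + Q i *v y + c' = C *v xb + Q i *v yb i - c"
      unfolding upper_image_def by auto
    define y' where "y' = yb(i := y)"
    have feas': "(xb, y') \<in> D"
      using feas y unfolding D_def y'_def by (auto simp: algebra_simps)
    have Pe: "P (xb, y') = P (xb, yb) + (p i *\<^sub>R (Q i *v y) - p i *\<^sub>R (Q i *v yb i))"
      unfolding P_def y'_def
      using sum_upd_aux[of "\<lambda>j w. p j *\<^sub>R (Q j *v w)" yb i y] by simp
    have qd: "Q i *v y - Q i *v yb i = - c - c'" using eq by (simp add: algebra_simps)
    have "P (xb, y') + p i *\<^sub>R c' = P (xb, yb) - p i *\<^sub>R c"
      unfolding Pe by (simp add: scaleR_diff_right[symmetric] qd algebra_simps)
    moreover have "P (xb, y') + p i *\<^sub>R c' \<in> upper_image P D"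
    proof -
      have "p i *\<^sub>R c' \<in> nonneg_cone" using c' pi by (simp add: nonneg_cone_def)
      then show ?thesis unfolding upper_image_def using feas' by blast
    qed
    moreover have "p i *\<^sub>R c \<in> nonneg_cone - {0}"
      using c pi by (auto simp: nonneg_cone_def)
    ultimately show False using nomin by blast
  qed
  then show "mo_minimizer (\<lambda>y. C *v xb + Q i *v y)
                 {y. W i *v y = u i - T i *v xb \<and> (\<forall>j. 0 \<le> y $ j)} (yb i)"
    unfolding mo_minimizer_def minimal_point_def using fi inU by blast
qed

end
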